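(* Let $X$ be a vector space and let $Y_\rho$ be a $\rho$-complete modular space associated with a convex modular $\rho$. Let $\varepsilon>0$ and let $\phi: X\to Y_\rho$ be a mapping with $\phi(0)=0$ and $$\rho\big(\phi(x+y-z)+\phi(x+z-y)+\phi(y+z-x)-\phi(x-y)-\phi(x-z)-\phi(z-y)-\phi(x)-\phi(y)-\phi(z)\big) \le \varepsilon$$ for all $x,y,z\in X$. Then there exists a unique quadratic mapping $h: X\to Y_\rho$ such that $$\rho(\phi(x)-h(x)) \le \frac{\varepsilon}{3} \quad\text{for all } x\in X.$$
   Context: A convex modular on a vector space $Y$ is a functional $\rho: Y\to[0,\infty)$ such that for all $u,v\in Y$: (i) $\rho(u)=0$ iff $u=0$; (ii) $\rho(\lambda u)=\rho(u)$ for every scalar $\lambda$ with $|\lambda|=1$; (iii) $\rho(a u+b v)\le a\rho(u)+b\rho(v)$ whenever $a,b\ge 0$ and $a+b=1$. The associated modular space is $Y_\rho=\{u\in Y: \rho(\lambda u)\to 0 \text{ as } \lambda\to 0\}$. A sequence $\{u_n\}$ in $Y_\rho$ is $\rho$-convergent to $u$ if $\rho(u_n-u)\to 0$; it is $\rho$-Cauchy if $\rho(u_n-u_m)\to0$ as $n,m\to\infty$; $Y_\rho$ is $\rho$-complete if every $\rho$-Cauchy sequence in $Y_\rho$ is $\rho$-convergent. A mapping $h: X\to Y_\rho$ is quadratic if $h(x+y)+h(x-y)=2h(x)+2h(y)$ for all $x,y\in X$. *)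

theory Defs
  imports Complex_Main
begin

definition convex_modular :: "('b::real_vector \<Rightarrow> real) \<Rightarrow> bool" where
  "convex_modular \<rho> \<longleftrightarrow>
     (\<forall>u. \<rho> u \<ge> 0) \<and>
     (\<forall>u. \<rho> u = 0 \<longleftrightarrow> u = 0) \<and>
     (\<forall>u (l::real). \<bar>l\<bar> = 1 \<longrightarrow> \<rho> (l *\<^sub>R u) = \<rho> u) \<and>
     (\<forall>u v (a::real) b. a \<ge> 0 \<and> b \<ge> 0 \<and> a + b = 1 \<longrightarrow>
          \<rho> (a *\<^sub>R u + b *\<^sub>R v) \<le> a * \<rho> u + b * \<rho> v)"

definition modular_space :: "('b::real_vector \<Rightarrow> real) \<Rightarrow> 'b set" where
  "modular_space \<rho> = {u. ((\<lambda>l::real. \<rho> (l *\<^sub>R u)) \<longlongrightarrow> 0) (at 0)}"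

definition rho_cauchy :: "('b::real_vector \<Rightarrow> real) \<Rightarrow> (nat \<Rightarrow> 'b) \<Rightarrow> bool" where
  "rho_cauchy \<rho> u \<longleftrightarrow> (\<forall>e>0. \<exists>N. \<forall>n\<ge>N. \<forall>m\<ge>N. \<rho> (u n - u m) < e)"

definition rho_convergent_to :: "('b::real_vector \<Rightarrow> real) \<Rightarrow> (nat \<Rightarrow> 'b) \<Rightarrow> 'b \<Rightarrow> bool" where
  "rho_convergent_to \<rho> u x \<longleftrightarrow> (\<lambda>n. \<rho> (u n - x)) \<longlonglongrightarrow> 0"

definition rho_complete :: "('b::real_vector \<Rightarrow> real) \<Rightarrow> bool" where
  "rho_complete \<rho> \<longleftrightarrow>
     (\<forall>u. (\<forall>n. u n \<in> modular_space \<rho>) \<and> rho_cauchy \<rho> u \<longrightarrow>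
          (\<exists>x\<in>modular_space \<rho>. rho_convergent_to \<rho> u x))"

definition quadratic_map :: "('a::real_vector \<Rightarrow> 'b::real_vector) \<Rightarrow> bool" where
  "quadratic_map h \<longleftrightarrow> (\<forall>x y. h (x + y) + h (x - y) = 2 *\<^sub>R h x + 2 *\<^sub>R h y)"

end

theory Submission
  imports Defs
begin

lemma cm_nonneg: "convex_modular \<rho> \<Longrightarrow> \<rho> u \<ge> 0"
  unfolding convex_modular_def by blast

lemma cm_zero: "convex_modular \<rho> \<Longrightarrow> \<rho> 0 = 0"
  unfolding convex_modular_def by blast

lemma cm_zero_iff: "convex_modular \<rho> \<Longrightarrow> \<rho> u = 0 \<longleftrightarrow> u = 0"
  unfolding convex_modular_def by blast

lemma cm_neg: "convex_modular \<rho> \<Longrightarrow> \<rho> (- u) = \<rho> u"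
  unfolding convex_modular_def
  by (metis abs_minus_cancel abs_one scaleR_minus1_left)

lemma cm_conv: "convex_modular \<rho> \<Longrightarrow> a \<ge> 0 \<Longrightarrow> b \<ge> 0 \<Longrightarrow> a + b = 1 \<Longrightarrow>
   \<rho> (a *\<^sub>R u + b *\<^sub>R v) \<le> a * \<rho> u + b * \<rho> v"
  unfolding convex_modular_def by blast

lemma cm_scale: assumes "convex_modular \<rho>" "0 \<le> a" "a \<le> 1"
  shows "\<rho> (a *\<^sub>R u) \<le> a * \<rho> u"
  using cm_conv[OF assms(1) assms(2), of "1 - a" u 0] assms cm_zero[OF assms(1)] by simp

lemma cm_scale_abs: assumes "convex_modular \<rho>" "\<bar>a\<bar> \<le> 1"
  shows "\<rho> (a *\<^sub>R u) \<le> \<bar>a\<bar> * \<rho> u"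
proof (cases "a \<ge> 0")
  case True then show ?thesis using cm_scale[OF assms(1)] assms by simp
next
  case False
  then have "a *\<^sub>R u = - (\<bar>a\<bar> *\<^sub>R u)" by simp
  then show ?thesis using cm_scale[OF assms(1), of "\<bar>a\<bar>" u] assms cm_neg[OF assms(1)] by simp
qed

lemma cm_conv_le: assumes "convex_modular \<rho>" "a \<ge> 0" "b \<ge> 0" "a + b \<le> 1"
  shows "\<rho> (a *\<^sub>R u + b *\<^sub>R v) \<le> a * \<rho> u + b * \<rho> v"
proof (cases "a + b = 0")
  case True then have "a = 0" "b = 0" using assms by auto
  then show ?thesis using cm_zero[OF assms(1)] by simp
next
  case False
  define s where "s = a + b"
  have s: "s > 0" "s \<le> 1" using False assms unfolding s_def by auto
  have eq: "a *\<^sub>R u + b *\<^sub>R v = s *\<^sub>R ((a/s) *\<^sub>R u + (b/s) *\<^sub>R v)"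
    using s by (simp add: scaleR_add_right)
  have "\<rho> (a *\<^sub>R u + b *\<^sub>R v) \<le> s * \<rho> ((a/s) *\<^sub>R u + (b/s) *\<^sub>R v)"
    unfolding eq using cm_scale[OF assms(1)] s by simp
  also have "\<dots> \<le> s * ((a/s) * \<rho> u + (b/s) * \<rho> v)"
    apply (rule mult_left_mono)
     apply (rule cm_conv[OF assms(1)])
    using s assms by (auto simp: s_def add_divide_distrib[symmetric])
  also have "\<dots> = a * \<rho> u + b * \<rho> v" using s by (simp add: field_simps)
  finally show ?thesis .
qed

lemma cm_list: assumes "convex_modular \<rho>"
  shows "0 \<le> c \<Longrightarrow> c * real (length us) \<le> 1 \<Longrightarrow> \<rho> (c *\<^sub>R sum_list us) \<le> c * sum_list (map \<rho> us)"
proof (induction us arbitrary: c)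
  case Nil then show ?case using cm_zero[OF assms] by simp
next
  case (Cons u us)
  show ?case
  proof (cases "us = []")
    case True then show ?thesis using Cons.prems cm_scale[OF assms, of c u] by simp
  next
    case False
    define n where "n = real (length us)"
    have n: "n \<ge> 1" using False unfolding n_def by (cases us) auto
    have IH: "\<rho> ((1/n) *\<^sub>R sum_list us) \<le> (1/n) * sum_list (map \<rho> us)"
      using Cons.IH[of "1/n"] n unfolding n_def by simp
    have c: "c + c * n \<le> 1" using Cons.prems unfolding n_def by (simp add: algebra_simps)
    have eq: "c *\<^sub>R sum_list (u # us) = c *\<^sub>R u + (c * n) *\<^sub>R ((1/n) *\<^sub>R sum_list us)"
      using n by (simp add: scaleR_add_right)
    have "\<rho> (c *\<^sub>R sum_list (u # us)) \<le> c * \<rho> u + (c * n) * \<rho> ((1/n) *\<^sub>R sum_list us)"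
      unfolding eq by (rule cm_conv_le[OF assms]) (use Cons.prems n c in auto)
    also have "\<dots> \<le> c * \<rho> u + (c * n) * ((1/n) * sum_list (map \<rho> us))"
      using IH Cons.prems n by (intro add_left_mono mult_left_mono) auto
    also have "\<dots> = c * sum_list (map \<rho> (u # us))" using n by (simp add: algebra_simps)
    finally show ?thesis .
  qed
qed

lemma cm_modular_space: assumes "convex_modular \<rho>" shows "u \<in> modular_space \<rho>"
  unfolding modular_space_def
proof (rule, rule tendsto_sandwich[of "\<lambda>l. 0" _ _ "\<lambda>l. \<bar>l\<bar> * \<rho> u"])
  show "\<forall>\<^sub>F l in at 0. 0 \<le> \<rho> (l *\<^sub>R u)" using cm_nonneg[OF assms] by simp
  show "\<forall>\<^sub>F l in at (0::real). \<rho> (l *\<^sub>R u) \<le> \<bar>l\<bar> * \<rho> u"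
    unfolding eventually_at using cm_scale_abs[OF assms]
    by (intro exI[of _ 1]) (auto simp: dist_real_def)
  show "((\<lambda>l::real. \<bar>l\<bar> * \<rho> u) \<longlongrightarrow> 0) (at 0)"
    by (intro tendsto_mult_left_zero tendsto_rabs_zero tendsto_ident_at)
qed simp

lemma le_zero_by_geom:
  fixes r C :: real
  assumes "\<And>n. r \<le> C * (1/4)^n" "C \<ge> 0"
  shows "r \<le> 0"
proof (rule ccontr)
  assume "\<not> r \<le> 0"
  then have r: "r > 0" by simp
  then have "C > 0" using assms(1)[of 0] by simp
  then obtain n where "(1/4::real)^n < r / C" using real_arch_pow_inv[of "r/C" "1/4"] r by auto
  then have "C * (1/4)^n < r" using \<open>C > 0\<close> by (simp add: field_simps)
  then show False using assms(1)[of n] by simp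
qed

lemma quad_double: assumes "quadratic_map h" shows "h ((2::real)^n *\<^sub>R x) = 4^n *\<^sub>R h x"
proof -
  have "h 0 + h 0 = 2 *\<^sub>R h 0 + 2 *\<^sub>R h 0" using assms[unfolded quadratic_map_def, rule_format, of 0 0] by simp
  then have "2 *\<^sub>R h 0 = 0" by (simp add: scaleR_2)
  then have h0: "h 0 = 0" by simp
  have h2: "h (2 *\<^sub>R y) = 4 *\<^sub>R h y" for y
    using assms[unfolded quadratic_map_def, rule_format, of y y] h0
    by (simp add: scaleR_2[symmetric] scaleR_add_left[symmetric])
  show ?thesis
  proof (induction n)
    case 0 then show ?case by simp
  next
    case (Suc n)
    have "h ((2::real)^Suc n *\<^sub>R x) = h (2 *\<^sub>R ((2::real)^n *\<^sub>R x))" by simp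
    also have "\<dots> = 4 *\<^sub>R h ((2::real)^n *\<^sub>R x)" by (rule h2)
    also have "\<dots> = 4 *\<^sub>R (4^n *\<^sub>R h x)" using Suc by simp
    also have "\<dots> = 4^Suc n *\<^sub>R h x" by simp
    finally show ?case .
  qed
qed


lemma uniq_quad:
  assumes cm: "convex_modular \<rho>" and q1: "quadratic_map h1" and q2: "quadratic_map h2"
    and b1: "\<forall>x. \<rho> (\<phi> x - h1 x) \<le> c" and b2: "\<forall>x. \<rho> (\<phi> x - h2 x) \<le> c"
  shows "h1 = h2"
proof
  fix x
  have "\<rho> (h1 x - h2 x) \<le> (2*c) * (1/4)^n" for n
  proof -
    define y where "y = (2::real)^Suc n *\<^sub>R x"
    define a where "a = (1/4::real)^Suc n"
    have a1: "(1/4::real)^n \<le> 1" by (rule power_le_one) auto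
    have a: "0 \<le> a" "a + a \<le> 1" "a \<le> (1/4)^n" unfolding a_def using a1 by auto
    have "h1 y = 4^Suc n *\<^sub>R h1 x" "h2 y = 4^Suc n *\<^sub>R h2 x"
      unfolding y_def by (rule quad_double[OF q1], rule quad_double[OF q2])
    then have eq: "h1 x - h2 x = a *\<^sub>R (h1 y - \<phi> y) + a *\<^sub>R (\<phi> y - h2 y)"
      unfolding a_def by (simp add: algebra_simps power_one_over)
    have "\<rho> (h1 x - h2 x) \<le> a * \<rho> (h1 y - \<phi> y) + a * \<rho> (\<phi> y - h2 y)"
      unfolding eq by (rule cm_conv_le[OF cm]) (use a in auto)
    also have "\<rho> (h1 y - \<phi> y) = \<rho> (\<phi> y - h1 y)"
      using cm_neg[OF cm, of "\<phi> y - h1 y"] by simp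
    also have "a * \<rho> (\<phi> y - h1 y) + a * \<rho> (\<phi> y - h2 y) \<le> a * c + a * c"
      using b1 b2 a by (intro add_mono mult_left_mono) auto
    also have "\<dots> \<le> (2*c) * (1/4)^n"
    proof -
      have "c \<ge> 0" using b1 cm_nonneg[OF cm] by (meson order_trans)
      then show ?thesis using a mult_right_mono[OF a(3), of c] by (simp add: mult.commute)
    qed
    finally show ?thesis .
  qed
  moreover have "c \<ge> 0" using b1 cm_nonneg[OF cm] by (meson order_trans)
  ultimately have "\<rho> (h1 x - h2 x) \<le> 0" by (intro le_zero_by_geom[of _ "2*c"]) auto
  then have "\<rho> (h1 x - h2 x) = 0" using cm_nonneg[OF cm] by (meson antisym)
  then show "h1 x = h2 x" using cm_zero_iff[OF cm] by simp
qed

theorem corollary2p2: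
  fixes \<rho> :: "'b::real_vector \<Rightarrow> real"
    and \<phi> :: "'a::real_vector \<Rightarrow> 'b"
    and \<epsilon> :: real
  assumes "convex_modular \<rho>"
    and "rho_complete \<rho>"
    and "\<epsilon> > 0"
    and "\<forall>x. \<phi> x \<in> modular_space \<rho>"
    and "\<phi> 0 = 0"
    and "\<forall>x y z. \<rho> (\<phi> (x + y - z) + \<phi> (x + z - y) + \<phi> (y + z - x)
                 - \<phi> (x - y) - \<phi> (x - z) - \<phi> (z - y) - \<phi> x - \<phi> y - \<phi> z) \<le> \<epsilon>"
  shows "\<exists>!h. (\<forall>x. h x \<in> modular_space \<rho>) \<and> quadratic_map h \<and>
              (\<forall>x. \<rho> (\<phi> x - h x) \<le> \<epsilon> / 3)"
proof -
  note cm = assms(1)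
  define D where "D = (\<lambda>f::'a\<Rightarrow>'b. \<lambda>x y z. f (x+y-z) + f (x+z-y) + f (y+z-x)
      - f (x-y) - f (x-z) - f (z-y) - f x - f y - f z)"
  have hD: "\<rho> (D \<phi> x y z) \<le> \<epsilon>" for x y z using assms(6) unfolding D_def by blast
  define g where "g = (\<lambda>(n::nat) x. (1/4^n) *\<^sub>R \<phi> ((2::real)^n *\<^sub>R x))"
  have g0: "g 0 x = \<phi> x" for x by (simp add: g_def)
  have gshift: "g (m + j) x = (1/4^m) *\<^sub>R g j ((2::real)^m *\<^sub>R x)" for m j x
    by (simp add: g_def power_add mult.commute)
  have four: "(4::real) *\<^sub>R v = v + v + v + v" for v :: 'b
    using scaleR_add_left[of 2 2 v] by (simp add: scaleR_2)
  have two: "\<rho> (4 *\<^sub>R \<phi> x - \<phi> (2 *\<^sub>R x)) \<le> \<epsilon>" for x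
  proof -
    have "D \<phi> x 0 x = - (4 *\<^sub>R \<phi> x - \<phi> (2 *\<^sub>R x))"
      by (simp add: D_def assms(5) scaleR_2 four)
    then show ?thesis using hD[of x 0 x] cm_neg[OF cm] by metis
  qed
  have Q: "\<rho> (3 *\<^sub>R (\<phi> x - g n x)) \<le> \<epsilon>" for n x
  proof (induction n arbitrary: x)
    case 0 then show ?case using cm_zero[OF cm] assms(3) by (simp add: g0)
  next
    case (Suc n)
    have gS: "g (Suc n) x = (1/4) *\<^sub>R g n (2 *\<^sub>R x)"
      using gshift[of 1 n x] by simp
    have eq: "3 *\<^sub>R (\<phi> x - g (Suc n) x) = (3/4) *\<^sub>R (4 *\<^sub>R \<phi> x - \<phi> (2 *\<^sub>R x))
        + (1/4) *\<^sub>R (3 *\<^sub>R (\<phi> (2 *\<^sub>R x) - g n (2 *\<^sub>R x)))"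
      unfolding gS by (simp add: algebra_simps)
    have "\<rho> (3 *\<^sub>R (\<phi> x - g (Suc n) x)) \<le> (3/4) * \<rho> (4 *\<^sub>R \<phi> x - \<phi> (2 *\<^sub>R x))
        + (1/4) * \<rho> (3 *\<^sub>R (\<phi> (2 *\<^sub>R x) - g n (2 *\<^sub>R x)))"
      unfolding eq by (rule cm_conv[OF cm]) auto
    also have "\<dots> \<le> (3/4) * \<epsilon> + (1/4) * \<epsilon>"
      using two[of x] Suc.IH[of "2 *\<^sub>R x"] by (intro add_mono) auto
    finally show ?case by simp
  qed
  have cauchy_bound: "\<rho> ((3/2) *\<^sub>R g m x - (3/2) *\<^sub>R g (m+j) x) \<le> \<epsilon> * (1/4)^m" for m j x
  proof -
    define y where "y = (2::real)^m *\<^sub>R x"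
    have "g m x = (1/4^m) *\<^sub>R \<phi> y" unfolding g_def y_def by simp
    have p4: "(1::real) \<le> 4^m" by (rule one_le_power) simp
    have p6: "(1::real) \<le> 2*4^m" using p4 by linarith
    have p5: "0 \<le> 1/(2*4^m::real)" "1/(2*4^m::real) \<le> 1" using p6 by auto
    from \<open>g m x = _\<close> have eq: "(3/2) *\<^sub>R g m x - (3/2) *\<^sub>R g (m+j) x = (1/(2*4^m)) *\<^sub>R (3 *\<^sub>R (\<phi> y - g j y))"
      unfolding gshift y_def by (simp add: algebra_simps)
    have "\<rho> ((3/2) *\<^sub>R g m x - (3/2) *\<^sub>R g (m+j) x) \<le> (1/(2*4^m)) * \<rho> (3 *\<^sub>R (\<phi> y - g j y))"
      unfolding eq by (rule cm_scale[OF cm]) (use p5 in auto)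
    also have "\<dots> \<le> (1/(2*4^m)) * \<epsilon>" using Q by (intro mult_left_mono) auto
    also have "\<dots> \<le> \<epsilon> * (1/4)^m" using assms(3) by (simp add: field_simps)
    finally show ?thesis .
  qed
  have cauchy: "rho_cauchy \<rho> (\<lambda>m. (3/2) *\<^sub>R g m x)" for x
    unfolding rho_cauchy_def
  proof (intro allI impI)
    fix e :: real assume e: "e > 0"
    obtain N where N: "(1/4::real)^N < e / \<epsilon>" using real_arch_pow_inv[of "e/\<epsilon>" "1/4"] e assms(3) by auto
    have NN: "\<epsilon> * (1/4)^k < e" if "k \<ge> N" for k
    proof -
      have "(1/4::real)^k \<le> (1/4)^N" using that by (simp add: power_decreasing)
      then have "\<epsilon> * (1/4::real)^k \<le> \<epsilon> * (1/4)^N" using assms(3) by (intro mult_left_mono) auto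
      also have "\<dots> < e" using N assms(3) by (simp add: field_simps)
      finally show ?thesis .
    qed
    show "\<exists>N. \<forall>n\<ge>N. \<forall>m\<ge>N. \<rho> ((3/2) *\<^sub>R g n x - (3/2) *\<^sub>R g m x) < e"
    proof (intro exI allI impI)
      fix n m assume nm: "n \<ge> N" "m \<ge> N"
      show "\<rho> ((3/2) *\<^sub>R g n x - (3/2) *\<^sub>R g m x) < e"
      proof (cases "n \<le> m")
        case True
        then obtain j where "m = n + j" using le_Suc_ex by blast
        then show ?thesis using cauchy_bound[of n x j] NN[OF nm(1)] by simp
      next
        case False
        then obtain j where j: "n = m + j" using le_Suc_ex[of m n] by auto
        have "\<rho> ((3/2) *\<^sub>R g n x - (3/2) *\<^sub>R g m x) = \<rho> ((3/2) *\<^sub>R g m x - (3/2) *\<^sub>R g n x)"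
          using cm_neg[OF cm, of "(3/2) *\<^sub>R g m x - (3/2) *\<^sub>R g n x"] by simp
        then show ?thesis using cauchy_bound[of m x j] NN[OF nm(2)] j by simp
      qed
    qed
  qed
  have "\<forall>x. \<exists>L. rho_convergent_to \<rho> (\<lambda>m. (3/2) *\<^sub>R g m x) L"
    using assms(2) cauchy cm_modular_space[OF cm] unfolding rho_complete_def by blast
  then obtain L where L: "\<And>x. rho_convergent_to \<rho> (\<lambda>m. (3/2) *\<^sub>R g m x) (L x)" by metis
  define h where "h = (\<lambda>x. (2/3::real) *\<^sub>R L x)"
  define r where "r = (\<lambda>p m. \<rho> ((3/2) *\<^sub>R g m p - L p))"
  have r0: "r p \<longlonglongrightarrow> 0" for p using L[of p] unfolding r_def rho_convergent_to_def by simp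
  have gh: "\<rho> (g m p - h p) \<le> (2/3) * r p m" for m p
  proof -
    have "g m p - h p = (2/3) *\<^sub>R ((3/2) *\<^sub>R g m p - L p)" unfolding h_def by (simp add: algebra_simps)
    then show ?thesis unfolding r_def using cm_scale[OF cm, of "2/3"] by simp
  qed
  have hg: "\<rho> (h p - g m p) \<le> (2/3) * r p m" for m p
    using gh[of m p] cm_neg[OF cm, of "g m p - h p"] by simp
  have bound: "\<rho> (\<phi> x - h x) \<le> \<epsilon> / 3" for x
  proof (rule LIMSEQ_le_const)
    show "(\<lambda>m. \<epsilon>/3 + (2/3) * r x m) \<longlonglongrightarrow> \<epsilon>/3"
      using tendsto_add[OF tendsto_const tendsto_mult[OF tendsto_const r0[of x]], of "\<epsilon>/3" "2/3"] by simp
    show "\<exists>N. \<forall>m\<ge>N. \<rho> (\<phi> x - h x) \<le> \<epsilon>/3 + (2/3) * r x m"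
    proof (intro exI allI impI)
      fix m :: nat
      have eq: "\<phi> x - h x = (1/3) *\<^sub>R (3 *\<^sub>R (\<phi> x - g m x)) + (2/3) *\<^sub>R ((3/2) *\<^sub>R g m x - L x)"
        unfolding h_def by (simp add: algebra_simps)
      have "\<rho> (\<phi> x - h x) \<le> (1/3) * \<rho> (3 *\<^sub>R (\<phi> x - g m x)) + (2/3) * r x m"
        unfolding eq r_def by (rule cm_conv[OF cm]) auto
      then show "\<rho> (\<phi> x - h x) \<le> \<epsilon>/3 + (2/3) * r x m" using Q[of x m] by simp
    qed
  qed
  have Dg: "\<rho> (D (g n) x y z) \<le> \<epsilon> * (1/4)^n" for n x y z
  proof -
    have "D (g n) x y z = (1/4^n) *\<^sub>R D \<phi> ((2::real)^n *\<^sub>R x) ((2::real)^n *\<^sub>R y) ((2::real)^n *\<^sub>R z)"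
      unfolding D_def g_def by (simp add: algebra_simps)
    moreover have "(1/4^n::real) \<le> 1" by simp
    ultimately have "\<rho> (D (g n) x y z) \<le> (1/4^n) * \<rho> (D \<phi> ((2::real)^n *\<^sub>R x) ((2::real)^n *\<^sub>R y) ((2::real)^n *\<^sub>R z))"
      using cm_scale[OF cm, of "1/4^n"] by simp
    also have "\<dots> \<le> (1/4^n) * \<epsilon>" using hD by (intro mult_left_mono) auto
    finally show ?thesis by (simp add: power_one_over mult.commute)
  qed
  have Dh: "D h x y z = 0" for x y z
  proof -
    define B where "B = (\<lambda>m. (1/10) * (\<epsilon> * (1/4)^m + (2/3) * (r (x+y-z) m + r (x+z-y) m + r (y+z-x) m
       + r (x-y) m + r (x-z) m + r (z-y) m + r x m + r y m + r z m)))"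
    have B0: "B \<longlonglongrightarrow> 0"
    proof -
      have "B \<longlonglongrightarrow> (1/10) * (\<epsilon> * 0 + (2/3) * (0+0+0+0+0+0+0+0+0))"
        unfolding B_def
        by (intro tendsto_intros r0 LIMSEQ_power_zero) auto
      then show ?thesis by simp
    qed
    have "\<rho> ((1/10) *\<^sub>R D h x y z) \<le> 0"
    proof (rule LIMSEQ_le_const[OF B0], intro exI allI impI)
      fix m :: nat
      define us where "us = [D (g m) x y z, h (x+y-z) - g m (x+y-z), h (x+z-y) - g m (x+z-y),
        h (y+z-x) - g m (y+z-x), g m (x-y) - h (x-y), g m (x-z) - h (x-z), g m (z-y) - h (z-y),
        g m x - h x, g m y - h y, g m z - h z]"
      have "sum_list us = D h x y z" unfolding us_def D_def by (simp add: algebra_simps)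
      then have "\<rho> ((1/10) *\<^sub>R D h x y z) \<le> (1/10) * sum_list (map \<rho> us)"
        using cm_list[OF cm, of "1/10" us] by (simp add: us_def)
      also have "\<dots> \<le> B m" unfolding B_def us_def
        apply (simp only: list.map sum_list.Cons sum_list.Nil add_0_right)
        apply (rule mult_left_mono)
         prefer 2 apply simp
        apply (rule order_trans[OF add_mono[OF Dg[of m x y z] add_mono[OF hg[where m=m and p="x+y-z"]
           add_mono[OF hg[where m=m and p="x+z-y"] add_mono[OF hg[where m=m and p="y+z-x"]
           add_mono[OF gh[where m=m and p="x-y"] add_mono[OF gh[where m=m and p="x-z"]
           add_mono[OF gh[where m=m and p="z-y"] add_mono[OF gh[where m=m and p=x]
           add_mono[OF gh[where m=m and p=y] gh[where m=m and p=z]]]]]]]]]]])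
        apply (simp add: algebra_simps)
        done
      finally show "\<rho> ((1/10) *\<^sub>R D h x y z) \<le> B m" .
    qed
    then have "\<rho> ((1/10) *\<^sub>R D h x y z) = 0" using cm_nonneg[OF cm] by (meson antisym)
    then show ?thesis using cm_zero_iff[OF cm] by simp
  qed
  have h0: "h 0 = 0"
  proof -
    have three: "(3::real) *\<^sub>R v = v + v + v" for v :: 'b
      using scaleR_add_left[of 2 1 v] by (simp add: scaleR_2)
    have "D h 0 0 0 = - (3::real) *\<^sub>R h 0" unfolding D_def by (simp add: algebra_simps three)
    then show ?thesis using Dh[of 0 0 0] by simp
  qed
  have quad: "quadratic_map h"
    unfolding quadratic_map_def
  proof (intro allI)
    fix x y
    have "h (x+y) + h (x-y) - (2 *\<^sub>R h x + 2 *\<^sub>R h y) = D h 0 x y + D h x 0 0 + D h y 0 0"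
      unfolding D_def by (simp add: h0 scaleR_2 algebra_simps)
    then show "h (x+y) + h (x-y) = 2 *\<^sub>R h x + 2 *\<^sub>R h y" using Dh by simp
  qed
  show ?thesis
  proof (rule ex1I[of _ h])
    show "(\<forall>x. h x \<in> modular_space \<rho>) \<and> quadratic_map h \<and> (\<forall>x. \<rho> (\<phi> x - h x) \<le> \<epsilon> / 3)"
      using cm_modular_space[OF cm] quad bound by blast
  next
    fix h' assume "(\<forall>x. h' x \<in> modular_space \<rho>) \<and> quadratic_map h' \<and> (\<forall>x. \<rho> (\<phi> x - h' x) \<le> \<epsilon> / 3)"
    then show "h' = h" using uniq_quad[OF cm _ quad, of h' \<phi> "\<epsilon>/3"] bound by blast
  qed
qed
end
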